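(* Let $2\le m\le n$ and let $G=P_m\times P_n$ be the rectangular grid with vertex set $\{1,\dots,m\}\times\{1,\dots,n\}$, two vertices being adjacent iff they differ by $1$ in exactly one coordinate. Then the boundary cycle of $G$ (the cycle through all vertices with $i\in\{1,m\}$ or $j\in\{1,n\}$) is an $(m-1)$-supported cycle in $G$.
   Context: A cycle $C$ in a graph $G$ is $k$-supported if it can be partitioned into three edge-disjoint paths $I_1,I_2,I_3$, with $I_1\cap I_2$, $I_2\cap I_3$, $I_3\cap I_1$ each a single vertex, such that for all vertices $u_i\in V(I_i)$ ($i=1,2,3$), $\max_{i,j\in\{1,2,3\}} d_G(u_i,u_j)\ge k$, where $d_G$ is the graph distance. *)

theory Defs
  imports Main
begin

definition is_walk :: "'a set \<Rightarrow> ('a \<Rightarrow> 'a \<Rightarrow> bool) \<Rightarrow> 'a list \<Rightarrow> bool" where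
  "is_walk V E p \<longleftrightarrow> p \<noteq> [] \<and> set p \<subseteq> V \<and> (\<forall>i. Suc i < length p \<longrightarrow> E (p ! i) (p ! Suc i))"

definition is_path :: "'a set \<Rightarrow> ('a \<Rightarrow> 'a \<Rightarrow> bool) \<Rightarrow> 'a list \<Rightarrow> bool" where
  "is_path V E p \<longleftrightarrow> is_walk V E p \<and> distinct p"

definition gdist :: "'a set \<Rightarrow> ('a \<Rightarrow> 'a \<Rightarrow> bool) \<Rightarrow> 'a \<Rightarrow> 'a \<Rightarrow> nat" where
  "gdist V E u v = (LEAST k. \<exists>p. is_walk V E p \<and> hd p = u \<and> last p = v \<and> length p = Suc k)"

definition path_edges :: "'a list \<Rightarrow> 'a set set" where
  "path_edges p = {{p ! i, p ! Suc i} | i. Suc i < length p}"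

text \<open>A cycle is given by its cyclic vertex sequence (closing edge from the last to the first vertex).\<close>
definition is_cycle :: "'a set \<Rightarrow> ('a \<Rightarrow> 'a \<Rightarrow> bool) \<Rightarrow> 'a list \<Rightarrow> bool" where
  "is_cycle V E C \<longleftrightarrow> length C \<ge> 3 \<and> is_path V E C \<and> E (last C) (hd C)"

definition cycle_edges :: "'a list \<Rightarrow> 'a set set" where
  "cycle_edges C = {{C ! i, C ! ((Suc i) mod length C)} | i. i < length C}"

definition k_supported :: "'a set \<Rightarrow> ('a \<Rightarrow> 'a \<Rightarrow> bool) \<Rightarrow> nat \<Rightarrow> 'a list \<Rightarrow> bool" where
  "k_supported V E k C \<longleftrightarrow> is_cycle V E C \<and>
     (\<exists>I1 I2 I3. is_path V E I1 \<and> is_path V E I2 \<and> is_path V E I3 \<and>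
        path_edges I1 \<union> path_edges I2 \<union> path_edges I3 = cycle_edges C \<and>
        path_edges I1 \<inter> path_edges I2 = {} \<and> path_edges I2 \<inter> path_edges I3 = {} \<and>
        path_edges I3 \<inter> path_edges I1 = {} \<and>
        (\<exists>x. set I1 \<inter> set I2 = {x}) \<and> (\<exists>x. set I2 \<inter> set I3 = {x}) \<and>
        (\<exists>x. set I3 \<inter> set I1 = {x}) \<and>
        (\<forall>u1\<in>set I1. \<forall>u2\<in>set I2. \<forall>u3\<in>set I3.
           max (gdist V E u1 u2) (max (gdist V E u2 u3) (gdist V E u3 u1)) \<ge> k))"

definition grid_V :: "nat \<Rightarrow> nat \<Rightarrow> (nat \<times> nat) set" where
  "grid_V m n = {1..m} \<times> {1..n}"

definition grid_E :: "nat \<Rightarrow> nat \<Rightarrow> nat \<times> nat \<Rightarrow> nat \<times> nat \<Rightarrow> bool" where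
  "grid_E m n u v \<longleftrightarrow> u \<in> grid_V m n \<and> v \<in> grid_V m n \<and>
     ((fst u = fst v \<and> \<bar>int (snd u) - int (snd v)\<bar> = 1) \<or>
      (snd u = snd v \<and> \<bar>int (fst u) - int (fst v)\<bar> = 1))"

definition boundary_cycle :: "nat \<Rightarrow> nat \<Rightarrow> (nat \<times> nat) list" where
  "boundary_cycle m n =
     map (\<lambda>j. (1, j)) [1..<n+1] @ map (\<lambda>i. (i, n)) [2..<m+1] @
     map (\<lambda>j. (m, j)) (rev [1..<n]) @ map (\<lambda>i. (i, 1)) (rev [2..<m])"

end

theory Submission
  imports Defs
begin


lemma is_walk_succ: "is_walk V E p \<longleftrightarrow> p \<noteq> [] \<and> set p \<subseteq> V \<and> successively E p"
  by (simp add: is_walk_def successively_conv_nth)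

lemma path_edges_Nil[simp]: "path_edges [] = {}" and path_edges_single[simp]: "path_edges [x] = {}"
  by (auto simp: path_edges_def)

lemma path_edges_CC[simp]: "path_edges (x#y#xs) = insert {x,y} (path_edges (y#xs))"
proof -
  have "path_edges (x#y#xs) \<subseteq> insert {x,y} (path_edges (y#xs))"
  proof
    fix e assume "e \<in> path_edges (x#y#xs)"
    then obtain i where e: "e = {(x#y#xs)!i, (x#y#xs)!Suc i}" "Suc i < length (x#y#xs)"
      by (auto simp: path_edges_def)
    show "e \<in> insert {x,y} (path_edges (y#xs))"
    proof (cases i)
      case 0 then show ?thesis using e by simp
    next
      case (Suc k) then show ?thesis using e unfolding path_edges_def by auto
    qed
  qed
  moreover have "insert {x,y} (path_edges (y#xs)) \<subseteq> path_edges (x#y#xs)"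
  proof
    fix e assume "e \<in> insert {x,y} (path_edges (y#xs))"
    then show "e \<in> path_edges (x#y#xs)"
    proof
      assume "e = {x,y}" then show ?thesis unfolding path_edges_def
        by (auto intro!: exI[of _ 0])
    next
      assume "e \<in> path_edges (y#xs)"
      then obtain i where e: "e = {(y#xs)!i, (y#xs)!Suc i}" "Suc i < length (y#xs)"
        by (auto simp: path_edges_def)
      then show ?thesis unfolding path_edges_def
        by (auto intro!: exI[of _ "Suc i"])
    qed
  qed
  ultimately show ?thesis by blast
qed

lemma path_edges_Cons: "path_edges (x#xs) = (if xs = [] then {} else insert {x, hd xs} (path_edges xs))"
  by (cases xs) auto

lemma path_edges_append: "path_edges (xs@ys) = path_edges xs \<union> path_edges ys \<union>
   (if xs = [] \<or> ys = [] then {} else {{last xs, hd ys}})"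
proof (induction xs)
  case Nil then show ?case by simp
next
  case (Cons x xs)
  show ?case
  proof (cases "xs = []")
    case True then show ?thesis by (simp add: path_edges_Cons)
  next
    case False
    then have "path_edges ((x#xs)@ys) = insert {x, hd xs} (path_edges (xs@ys))"
      by (simp add: path_edges_Cons)
    also have "\<dots> = insert {x, hd xs} (path_edges xs \<union> path_edges ys \<union>
        (if ys = [] then {} else {{last xs, hd ys}}))" using Cons.IH False by simp
    also have "\<dots> = path_edges (x#xs) \<union> path_edges ys \<union>
   (if x#xs = [] \<or> ys = [] then {} else {{last (x#xs), hd ys}})"
      using False by (simp add: path_edges_Cons)
    finally show ?thesis .
  qed
qed


lemma cycle_edges_eq: assumes "C \<noteq> []" shows "cycle_edges C = insert {last C, hd C} (path_edges C)"
proof -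
  have l: "last C = C ! (length C - 1)" "hd C = C ! 0" using assms by (auto simp: last_conv_nth hd_conv_nth)
  show ?thesis
  proof (intro set_eqI iffI)
    fix e assume "e \<in> cycle_edges C"
    then obtain i where e: "e = {C!i, C!(Suc i mod length C)}" "i < length C"
      by (auto simp: cycle_edges_def)
    show "e \<in> insert {last C, hd C} (path_edges C)"
    proof (cases "Suc i < length C")
      case True then show ?thesis using e by (auto simp: path_edges_def)
    next
      case False then have "Suc i = length C" using e by simp
      then have "i = length C - 1" "Suc i mod length C = 0" by simp_all
      then have "e = {last C, hd C}" using e(1) l by simp
      then show ?thesis by blast
    qed
  next
    fix e assume "e \<in> insert {last C, hd C} (path_edges C)"
    then show "e \<in> cycle_edges C"
    proof
      assume "e = {last C, hd C}"
      then show ?thesis unfolding cycle_edges_def using l assms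
        by (auto intro!: exI[of _ "length C - 1"])
    next
      assume "e \<in> path_edges C"
      then obtain i where e: "e = {C!i, C!Suc i}" "Suc i < length C"
        by (auto simp: path_edges_def)
      then show ?thesis unfolding cycle_edges_def by (auto intro!: exI[of _ i])
    qed
  qed
qed

lemma edges_split:
  assumes "A \<noteq> []" "B \<noteq> []" "Cc \<noteq> []"
  shows "cycle_edges (A@B@Cc@D) = path_edges A \<union> path_edges (last A # B @ Cc) \<union> path_edges (last Cc # D @ [hd A])"
  using assms
  apply (cases "D = []")
   apply (simp_all add: cycle_edges_eq path_edges_append path_edges_Cons)
  apply (simp add: insert_commute Un_ac)
  done

lemma path_edge_elem:
  assumes "is_walk V E p" "\<And>x. \<not> E x x" "e \<in> path_edges p"
  shows "\<exists>u v. e = {u,v} \<and> u \<noteq> v \<and> u \<in> set p \<and> v \<in> set p"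
proof -
  obtain i where e: "e = {p!i, p!Suc i}" "Suc i < length p" using assms(3) by (auto simp: path_edges_def)
  have "E (p!i) (p!Suc i)" using assms(1) e(2) unfolding is_walk_def by blast
  then have "p!i \<noteq> p!Suc i" using assms(2) by metis
  moreover have "p!i \<in> set p" "p!Suc i \<in> set p" using e(2) by (simp_all add: nth_mem)
  ultimately show ?thesis using e(1) by blast
qed

lemma disj_edges:
  assumes "is_walk V E p" "is_walk V E q" "\<And>x. \<not> E x x" "set p \<inter> set q = {x}"
  shows "path_edges p \<inter> path_edges q = {}"
proof (rule ccontr)
  assume "path_edges p \<inter> path_edges q \<noteq> {}"
  then obtain e where "e \<in> path_edges p" "e \<in> path_edges q" by blast
  from path_edge_elem[OF assms(1,3) this(1)] obtain u v where
    uv: "e = {u,v}" "u \<noteq> v" "u \<in> set p" "v \<in> set p" by blast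
  from path_edge_elem[OF assms(2,3) \<open>e \<in> path_edges q\<close>] have "e \<subseteq> set q" by blast
  with uv have "u \<in> set p \<inter> set q" "v \<in> set p \<inter> set q" by auto
  with uv(2) assms(4) show False by simp
qed

lemma succ_upt: "(\<And>i. a \<le> i \<Longrightarrow> Suc i < b \<Longrightarrow> P i (Suc i)) \<Longrightarrow> successively P [a..<b]"
  by (auto simp: successively_conv_nth)

lemma gdist_ge:
  assumes "\<exists>p. is_walk V E p \<and> hd p = u \<and> last p = v"
    and "\<And>p. is_walk V E p \<Longrightarrow> hd p = u \<Longrightarrow> last p = v \<Longrightarrow> d < length p"
  shows "d \<le> gdist V E u v"
proof -
  obtain p where p: "is_walk V E p" "hd p = u" "last p = v" using assms(1) by blast
  then have "p \<noteq> []" by (simp add: is_walk_def)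
  then have ex: "\<exists>k p. is_walk V E p \<and> hd p = u \<and> last p = v \<and> length p = Suc k"
    using p by (intro exI[of _ "length p - 1"] exI[of _ p]) auto
  obtain q where "is_walk V E q \<and> hd q = u \<and> last q = v \<and> length q = Suc (gdist V E u v)"
    using LeastI_ex[OF ex] unfolding gdist_def by blast
  with assms(2)[of q] show ?thesis by auto
qed

lemma walk_bound:
  assumes "is_walk V E p" "\<And>u v. E u v \<Longrightarrow> \<bar>f u - f v\<bar> \<le> (1::int)"
  shows "\<bar>f (hd p) - f (last p)\<bar> \<le> int (length p) - 1"
  using assms(1)
proof (induction p)
  case Nil then show ?case by (simp add: is_walk_def)
next
  case (Cons x xs)
  show ?case
  proof (cases "xs = []")
    case True then show ?thesis by simp
  next
    case False
    then have w: "is_walk V E xs" "E x (hd xs)" using Cons.prems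
      by (auto simp: is_walk_succ successively_Cons)
    have "\<bar>f x - f (hd xs)\<bar> \<le> 1" using assms(2) w(2) by blast
    with Cons.IH[OF w(1)] False show ?thesis by auto
  qed
qed



lemma grid_irrefl: "\<not> grid_E m n x x" by (simp add: grid_E_def)

lemma grid_fst: "grid_E m n u v \<Longrightarrow> \<bar>int (fst u) - int (fst v)\<bar> \<le> 1"
  by (auto simp: grid_E_def)
lemma grid_snd: "grid_E m n u v \<Longrightarrow> \<bar>int (snd u) - int (snd v)\<bar> \<le> 1"
  by (auto simp: grid_E_def)

lemma grid_step:
  assumes "u \<in> grid_V m n" "v \<in> grid_V m n" "u \<noteq> v"
  shows "\<exists>w. grid_E m n u w \<and>
     nat \<bar>int (fst w) - int (fst v)\<bar> + nat \<bar>int (snd w) - int (snd v)\<bar>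
   < nat \<bar>int (fst u) - int (fst v)\<bar> + nat \<bar>int (snd u) - int (snd v)\<bar>"
proof -
  obtain a b c d where u: "u = (a,b)" and v: "v = (c,d)" by (cases u, cases v) auto
  have r: "1 \<le> a" "a \<le> m" "1 \<le> b" "b \<le> n" "1 \<le> c" "c \<le> m" "1 \<le> d" "d \<le> n"
    using assms(1,2) u v by (auto simp: grid_V_def)
  consider "a < c" | "c < a" | "a = c" "b < d" | "a = c" "d < b" using assms(3) u v
    by (metis linorder_neqE_nat)
  then show ?thesis
  proof cases
    case 1 then show ?thesis using r u v
      by (intro exI[of _ "(Suc a, b)"]) (auto simp: grid_E_def grid_V_def)
  next
    case 2 then show ?thesis using r u v
      by (intro exI[of _ "(a - 1, b)"]) (auto simp: grid_E_def grid_V_def)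
  next
    case 3 then show ?thesis using r u v
      by (intro exI[of _ "(a, Suc b)"]) (auto simp: grid_E_def grid_V_def)
  next
    case 4 then show ?thesis using r u v
      by (intro exI[of _ "(a, b - 1)"]) (auto simp: grid_E_def grid_V_def)
  qed
qed

lemma grid_conn:
  assumes "v \<in> grid_V m n"
  shows "u \<in> grid_V m n \<Longrightarrow> \<exists>p. is_walk (grid_V m n) (grid_E m n) p \<and> hd p = u \<and> last p = v"
proof (induction "nat \<bar>int (fst u) - int (fst v)\<bar> + nat \<bar>int (snd u) - int (snd v)\<bar>" arbitrary: u rule: less_induct)
  case less
  show ?case
  proof (cases "u = v")
    case True then show ?thesis using less.prems
      by (intro exI[of _ "[v]"]) (simp add: is_walk_def)
  next
    case False
    obtain w where w: "grid_E m n u w" "nat \<bar>int (fst w) - int (fst v)\<bar> + nat \<bar>int (snd w) - int (snd v)\<bar>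
   < nat \<bar>int (fst u) - int (fst v)\<bar> + nat \<bar>int (snd u) - int (snd v)\<bar>"
      using grid_step[OF less.prems assms False] by blast
    have "w \<in> grid_V m n" using w(1) by (simp add: grid_E_def)
    from less.hyps[OF w(2) this] obtain p where p: "is_walk (grid_V m n) (grid_E m n) p" "hd p = w" "last p = v"
      by blast
    have "is_walk (grid_V m n) (grid_E m n) (u#p)"
      using p w(1) less.prems by (auto simp: is_walk_succ successively_Cons)
    then show ?thesis using p by (intro exI[of _ "u#p"]) (auto simp: is_walk_def)
  qed
qed

lemma gdist_lb:
  assumes "u \<in> grid_V m n" "v \<in> grid_V m n"
    and "f = fst \<or> f = snd"
    and "int d \<le> \<bar>int (f u) - int (f v)\<bar>"
  shows "d \<le> gdist (grid_V m n) (grid_E m n) u v"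
proof (rule gdist_ge)
  show "\<exists>p. is_walk (grid_V m n) (grid_E m n) p \<and> hd p = u \<and> last p = v"
    using grid_conn[OF assms(2,1)] .
  fix p assume p: "is_walk (grid_V m n) (grid_E m n) p" "hd p = u" "last p = v"
  have "\<bar>int (f (hd p)) - int (f (last p))\<bar> \<le> int (length p) - 1"
    using assms(3)
  proof
    assume "f = fst" then show ?thesis using walk_bound[OF p(1), of "\<lambda>x. int (fst x)"] grid_fst by blast
  next
    assume "f = snd" then show ?thesis using walk_bound[OF p(1), of "\<lambda>x. int (snd x)"] grid_snd by blast
  qed
  then show "d < length p" using p assms(4) by simp
qed



theorem mainTheorem5:
  fixes m n :: nat
  assumes "2 \<le> m" and "m \<le> n"
  shows "k_supported (grid_V m n) (grid_E m n) (m - 1) (boundary_cycle m n)"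
proof -
  let ?V = "grid_V m n" and ?E = "grid_E m n"
  define A where "A = map (\<lambda>j. (1::nat, j)) [1..<n+1]"
  define B where "B = map (\<lambda>i. (i, n)) [2..<m+1]"
  define Cc where "Cc = map (\<lambda>j. (m, j)) (rev [1..<n])"
  define D where "D = map (\<lambda>i. (i, 1::nat)) (rev [2..<m])"
  have C: "boundary_cycle m n = A@B@Cc@D" by (simp add: boundary_cycle_def A_def B_def Cc_def D_def)
  have ne: "A \<noteq> []" "B \<noteq> []" "Cc \<noteq> []" using assms by (auto simp: A_def B_def Cc_def)
  have hl: "hd A = (1,1)" "last A = (1,n)" "hd B = (2,n)" "last B = (m,n)" "hd Cc = (m, n-1)" "last Cc = (m,1)"
    using assms by (auto simp: A_def B_def Cc_def hd_map last_map hd_rev last_rev simp del: upt_Suc)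
  have hlD: "D \<noteq> [] \<Longrightarrow> hd D = (m-1,1) \<and> last D = (2,1)"
    by (auto simp: D_def hd_map last_map hd_rev last_rev)
  have setA: "set A = {1} \<times> {1..n}" by (auto simp: A_def)
  have setB: "set B = {2..m} \<times> {n}" by (auto simp: B_def)
  have setC: "set Cc = {m} \<times> {1..<n}" by (auto simp: Cc_def)
  have setD: "set D = {2..<m} \<times> {1}" by (auto simp: D_def)
  have sA: "successively ?E A" unfolding A_def successively_map
    using assms by (intro succ_upt) (auto simp: grid_E_def grid_V_def)
  have sB: "successively ?E B" unfolding B_def successively_map
    using assms by (intro succ_upt) (auto simp: grid_E_def grid_V_def)
  have sC: "successively ?E Cc" unfolding Cc_def successively_map successively_rev
    using assms by (intro succ_upt) (auto simp: grid_E_def grid_V_def)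
  have sD: "successively ?E D" unfolding D_def successively_map successively_rev
    using assms by (intro succ_upt) (auto simp: grid_E_def grid_V_def)
  have VA: "set A \<subseteq> ?V" "set B \<subseteq> ?V" "set Cc \<subseteq> ?V" "set D \<subseteq> ?V"
    using assms by (auto simp: setA setB setC setD grid_V_def)
  define I1 where "I1 = A"
  define I2 where "I2 = last A # B @ Cc"
  define I3 where "I3 = last Cc # D @ [hd A]"
  have E1: "?E (1,n) (2,n)" "?E (m,n) (m,n-1)" "?E (m,1) (1,1) \<or> m > 2" "?E (m,1) (m-1,1)" "?E (2,1) (1,1)"
    using assms by (auto simp: grid_E_def grid_V_def)
  have Vp: "(1,n) \<in> ?V" "(m,1) \<in> ?V" "(1,1) \<in> ?V" using assms by (auto simp: grid_V_def)
  have wI1: "is_walk ?V ?E I1" using ne sA VA by (simp add: I1_def is_walk_succ)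
  have wI2: "is_walk ?V ?E I2" using ne sB sC VA hl E1 assms Vp
    by (auto simp: I2_def is_walk_succ successively_append_iff successively_Cons)
  have wI3: "is_walk ?V ?E I3"
  proof (cases "D = []")
    case True
    then have "m = 2" using assms by (simp add: D_def)
    then show ?thesis using True VA hl E1 ne Vp by (auto simp: I3_def is_walk_succ)
  next
    case False
    then show ?thesis using sD VA hl hlD E1 ne Vp
      by (auto simp: I3_def is_walk_succ successively_append_iff successively_Cons)
  qed
  have lastC: "last (A@B@Cc@D) = (2,1)"
    using hl hlD ne assms by (cases "D = []") (auto simp: D_def)
  have wC: "is_walk ?V ?E (A@B@Cc@D)"
    using ne sA sB sC sD VA hl hlD E1
    by (cases "D = []") (auto simp: is_walk_succ successively_append_iff)
  have dC: "distinct (A@B@Cc@D)"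
    using assms by (auto simp: A_def B_def Cc_def D_def distinct_map inj_on_def)
  have sI1: "set I1 = {1} \<times> {1..n}" by (simp add: I1_def setA)
  have sI2: "set I2 = {1..m} \<times> {n} \<union> {m} \<times> {1..<n}"
    using assms by (auto simp: I2_def hl setB setC)
  have sI3: "set I3 = {1..m} \<times> {1}"
    using assms by (auto simp: I3_def hl setD)
  have i12: "set I1 \<inter> set I2 = {(1,n)}" using assms unfolding sI1 sI2 by auto
  have i23: "set I2 \<inter> set I3 = {(m,1)}" using assms unfolding sI2 sI3 by auto
  have i31: "set I3 \<inter> set I1 = {(1,1)}" using assms unfolding sI1 sI3 by auto
  have dI1: "distinct I1" using dC by (simp add: I1_def)
  have dI2: "distinct I2" using dC ne hl setA setB setC assms by (auto simp: I2_def)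
  have dI3: "distinct I3" using assms by (auto simp: I3_def hl D_def distinct_map inj_on_def)
  show ?thesis unfolding k_supported_def
  proof (intro conjI exI)
    show "is_cycle ?V ?E (boundary_cycle m n)" unfolding C is_cycle_def is_path_def
      using wC dC lastC ne hl assms E1 by (auto simp: A_def B_def Cc_def D_def)
    show "is_path ?V ?E I1" "is_path ?V ?E I2" "is_path ?V ?E I3"
      using wI1 wI2 wI3 dI1 dI2 dI3 by (simp_all add: is_path_def)
    show "path_edges I1 \<union> path_edges I2 \<union> path_edges I3 = cycle_edges (boundary_cycle m n)"
      unfolding C I1_def I2_def I3_def using edges_split[OF ne] by simp
    show "path_edges I1 \<inter> path_edges I2 = {}" by (rule disj_edges[OF wI1 wI2 grid_irrefl i12])
    show "path_edges I2 \<inter> path_edges I3 = {}" by (rule disj_edges[OF wI2 wI3 grid_irrefl i23])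
    show "path_edges I3 \<inter> path_edges I1 = {}" by (rule disj_edges[OF wI3 wI1 grid_irrefl i31])
    show "set I1 \<inter> set I2 = {(1,n)}" "set I2 \<inter> set I3 = {(m,1)}" "set I3 \<inter> set I1 = {(1,1)}"
      by (fact i12 i23 i31)+
    show "\<forall>u1\<in>set I1. \<forall>u2\<in>set I2. \<forall>u3\<in>set I3.
           m - 1 \<le> max (gdist ?V ?E u1 u2) (max (gdist ?V ?E u2 u3) (gdist ?V ?E u3 u1))"
    proof (intro ballI)
      fix u1 u2 u3 assume u: "u1 \<in> set I1" "u2 \<in> set I2" "u3 \<in> set I3"
      have V: "u1 \<in> ?V" "u2 \<in> ?V" "u3 \<in> ?V" using u assms unfolding sI1 sI2 sI3
        by (auto simp: grid_V_def)
      consider "fst u2 = m" | "snd u2 = n" using u(2) unfolding sI2 by auto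
      then show "m - 1 \<le> max (gdist ?V ?E u1 u2) (max (gdist ?V ?E u2 u3) (gdist ?V ?E u3 u1))"
      proof cases
        case 1
        have "m - 1 \<le> gdist ?V ?E u1 u2"
          by (rule gdist_lb[OF V(1,2), of fst]) (use u(1) 1 assms in \<open>auto simp: sI1\<close>)
        then show ?thesis by linarith
      next
        case 2
        have "m - 1 \<le> gdist ?V ?E u2 u3"
          by (rule gdist_lb[OF V(2,3), of snd]) (use u(3) 2 assms in \<open>auto simp: sI3\<close>)
        then show ?thesis by linarith
      qed
    qed
  qed
qed

end
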